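(* Let $L\ge 2$. (i) Every triangulation of $[0,1]^L$ induced by a generic fitness landscape whose fitness graph is a Haldane graph has $2^{L-1}$ isolated genotypes. (ii) For $L\ge 3$, no generic fitness landscape whose fitness graph is a Haldane graph induces a staircase triangulation. (iii) For every $L$, there exists a generic fitness landscape whose fitness graph is a Haldane graph and which induces a corner-cut triangulation.
   Context: Genotypes $g\in\{0,1\}^L$ are vertices of $[0,1]^L$. The triangulation induced by $w:\{0,1\}^L\to\mathbb{R}_{\ge 0}$ is the regular subdivision of $[0,1]^L$ obtained by projecting the upper faces of $\mathrm{conv}\{(g,w_g)\}$; $w$ is generic if all $w_g$ are distinct and this subdivision is a triangulation. The fitness graph directs each cube edge toward the genotype of higher fitness; a peak is a genotype with all neighbours of lower fitness. A Haldane graph is a fitness graph with the maximal possible number $2^{L-1}$ of peaks. A genotype $g$ is isolated (in a triangulation) if there is no genotype $g'$ at Hamming distance $2$ from $g$ such that $g,g'$ belong to a common simplex. A corner simplex consists of a vertex and its $L$ Hamming neighbours; a corner-cut triangulation is one having $2^{L-1}$ corner simplices. The standard staircase triangulation consists of the $L!$ simplices formed by the genotypes along a walk from $0\cdots0$ to $1\cdots1$ in which each step changes one $0$ to a $1$; a staircase triangulation is its image under any cube symmetry (coordinate permutations and bit flips). *)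

theory Defs
  imports "HOL-Analysis.Analysis"
begin

text \<open>Genotypes of length L = CARD('n) are subsets g of the (finite) locus type 'n;
  locus i carries a 1 iff i \<in> g.  The corresponding vertex of the cube [0,1]^L:\<close>

definition vert :: "'n::finite set \<Rightarrow> real^'n" where
  "vert g = (\<chi> i. if i \<in> g then 1 else 0)"

definition hamming :: "'n::finite set \<Rightarrow> 'n set \<Rightarrow> nat" where
  "hamming g h = card ((g - h) \<union> (h - g))"

text \<open>The genotype set of an upper face of conv{(g, w g)}: the genotypes whose lifted point
  lies on a supporting hyperplane x_{L+1} = a . x + c lying weakly above all lifted points.\<close>

definition upper_face :: "('n::finite set \<Rightarrow> real) \<Rightarrow> 'n set set \<Rightarrow> bool" where
  "upper_face w S \<longleftrightarrow>
     (\<exists>(a::real^'n) (c::real). (\<forall>g. w g \<le> a \<bullet> vert g + c) \<and> S = {g. w g = a \<bullet> vert g + c})"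

text \<open>Maximal cells of the regular subdivision induced by w: projections of the
  full-dimensional upper faces (given by their genotype sets).\<close>

definition induced_cells :: "('n::finite set \<Rightarrow> real) \<Rightarrow> 'n set set set" where
  "induced_cells w = {S. upper_face w S \<and> aff_dim (vert ` S) = int CARD('n)}"

definition generic :: "('n::finite set \<Rightarrow> real) \<Rightarrow> bool" where
  "generic w \<longleftrightarrow> inj w \<and> (\<forall>S \<in> induced_cells w. \<not> affine_dependent (vert ` S))"

definition fitness_landscape :: "('n::finite set \<Rightarrow> real) \<Rightarrow> bool" where
  "fitness_landscape w \<longleftrightarrow> (\<forall>g. 0 \<le> w g)"

definition peak :: "('n::finite set \<Rightarrow> real) \<Rightarrow> 'n set \<Rightarrow> bool" where
  "peak w g \<longleftrightarrow> (\<forall>h. hamming g h = 1 \<longrightarrow> w h < w g)"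

definition haldane :: "('n::finite set \<Rightarrow> real) \<Rightarrow> bool" where
  "haldane w \<longleftrightarrow> card {g. peak w g} = 2 ^ (CARD('n) - 1)"

definition isolated :: "'n::finite set set set \<Rightarrow> 'n set \<Rightarrow> bool" where
  "isolated T g \<longleftrightarrow> \<not> (\<exists>g' S. hamming g g' = 2 \<and> S \<in> T \<and> g \<in> S \<and> g' \<in> S)"

definition corner_simplex :: "'n::finite set set \<Rightarrow> bool" where
  "corner_simplex S \<longleftrightarrow> (\<exists>v. S = insert v {h. hamming v h = 1})"

definition corner_cut :: "'n::finite set set set \<Rightarrow> bool" where
  "corner_cut T \<longleftrightarrow> card {S \<in> T. corner_simplex S} = 2 ^ (CARD('n) - 1)"

text \<open>Standard staircase triangulation: one simplex per ordering xs of the loci, consisting of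
  the genotypes along the walk flipping the loci to 1 in the order xs.\<close>

definition standard_staircase :: "'n::finite set set set" where
  "standard_staircase =
     {{set (take k xs) | k. k \<le> length xs} | xs. distinct xs \<and> set xs = (UNIV :: 'n set)}"

text \<open>Cube symmetries: bit flips on the loci F followed by a coordinate permutation p.\<close>

definition cube_sym :: "('n \<Rightarrow> 'n) \<Rightarrow> 'n set \<Rightarrow> 'n set \<Rightarrow> 'n set" where
  "cube_sym p F g = p ` ((g - F) \<union> (F - g))"

definition staircase :: "'n::finite set set set \<Rightarrow> bool" where
  "staircase T \<longleftrightarrow> (\<exists>p F. bij p \<and> T = (\<lambda>S. cube_sym p F ` S) ` standard_staircase)"

end

theory Submission
  imports Defs "HOL-Computational_Algebra.Polynomial"
begin

definition sd :: "'n set \<Rightarrow> 'n set \<Rightarrow> 'n set" where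
  "sd g h = (g - h) \<union> (h - g)"

definition toggle :: "'n \<Rightarrow> 'n set \<Rightarrow> 'n set" where
  "toggle k g = (if k \<in> g then g - {k} else insert k g)"

lemma hamming_sd: "hamming g h = card (sd g h)"
  by (simp add: hamming_def sd_def)

lemma sd_commute: "sd g h = sd h g"
  by (auto simp: sd_def)

lemma toggle_toggle[simp]: "toggle k (toggle k g) = g"
  by (auto simp: toggle_def)

lemma toggle_comm: "toggle i (toggle j g) = toggle j (toggle i g)"
  by (auto simp: toggle_def)

lemma sd_toggle: "sd g (toggle k g) = {k}"
  by (auto simp: sd_def toggle_def)

lemma toggle_neq: "toggle k g \<noteq> g"
  by (auto simp: toggle_def)

lemma mem_sd: "z \<in> sd g h \<longleftrightarrow> (z \<in> g) \<noteq> (z \<in> h)"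
  by (auto simp: sd_def)

lemma mem_toggle: "z \<in> toggle k g \<longleftrightarrow> (if z = k then z \<notin> g else z \<in> g)"
  by (auto simp: toggle_def)

lemma sd_eq_single: "sd g h = {k} \<Longrightarrow> h = toggle k g"
proof -
  assume a: "sd g h = {k}"
  have "z \<in> h \<longleftrightarrow> z \<in> toggle k g" for z
  proof -
    have "z \<in> sd g h \<longleftrightarrow> z = k" using a by simp
    then show ?thesis unfolding mem_sd mem_toggle by (cases "z = k") auto
  qed
  then show ?thesis by (rule set_eqI)
qed

lemma hamming1_iff: "hamming g h = 1 \<longleftrightarrow> (\<exists>k. h = toggle k g)"
proof
  assume "hamming g h = 1"
  then have "card (sd g h) = 1" by (simp add: hamming_sd)
  then obtain k where "sd g h = {k}" by (rule card_1_singletonE)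
  then have "h = toggle k g" by (rule sd_eq_single)
  then show "\<exists>k. h = toggle k g" by (rule exI)
next
  assume "\<exists>k. h = toggle k g"
  then obtain k where "h = toggle k g" by blast
  then show "hamming g h = 1" by (simp add: hamming_sd sd_toggle)
qed

lemma sd_eq_two: "sd g h = {i, j} \<Longrightarrow> i \<noteq> j \<Longrightarrow> h = toggle j (toggle i g)"
proof -
  assume a: "sd g h = {i, j}" "i \<noteq> j"
  have "z \<in> h \<longleftrightarrow> z \<in> toggle j (toggle i g)" for z
  proof -
    have "z \<in> sd g h \<longleftrightarrow> z = i \<or> z = j" using a by simp
    then show ?thesis unfolding mem_sd mem_toggle using a(2) by (cases "z = i"; cases "z = j") auto
  qed
  then show ?thesis by (rule set_eqI)
qed

lemma hamming2_iff: "hamming g h = 2 \<longleftrightarrow> (\<exists>i j. i \<noteq> j \<and> h = toggle j (toggle i g))"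
proof
  assume "hamming g h = 2"
  then have "card (sd g h) = 2" by (simp add: hamming_sd)
  then obtain i j where "sd g h = {i, j}" "i \<noteq> j" using card_2_iff[THEN iffD1] by metis
  then have "h = toggle j (toggle i g)" by (rule sd_eq_two)
  then show "\<exists>i j. i \<noteq> j \<and> h = toggle j (toggle i g)" using \<open>i \<noteq> j\<close> by blast
next
  assume "\<exists>i j. i \<noteq> j \<and> h = toggle j (toggle i g)"
  then obtain i j where "i \<noteq> j" "h = toggle j (toggle i g)" by blast
  then have "sd g h = {i, j}" by (intro set_eqI) (simp add: mem_sd mem_toggle)
  then show "hamming g h = 2" using \<open>i \<noteq> j\<close> by (simp add: hamming_sd)
qed

lemma vert_comp: "vert g $ k = (if k \<in> g then 1 else 0)"
  by (simp add: vert_def)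

lemma inner_vert: "a \<bullet> vert (x::'n::finite set) = (\<Sum>k\<in>x. a $ k)"
proof -
  have "a \<bullet> vert x = (\<Sum>k\<in>UNIV. if k \<in> x then a $ k else 0)"
    by (simp add: inner_vec_def vert_comp if_distrib cong: if_cong)
  also have "\<dots> = (\<Sum>k\<in>x. a $ k)"
    by (simp add: sum.If_cases)
  finally show ?thesis .
qed

lemma vert_inj: "vert g = vert h \<Longrightarrow> g = h"
  by (auto simp: vec_eq_iff vert_comp split: if_splits)

lemma parallelogram:
  fixes v :: "'n::finite set"
  assumes "i \<noteq> j"
  shows "a \<bullet> vert v + a \<bullet> vert (toggle j (toggle i v)) = a \<bullet> vert (toggle i v) + a \<bullet> vert (toggle j v)"
proof -
  have "vert v + vert (toggle j (toggle i v)) = vert (toggle i v) + vert (toggle j v)"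
    using assms by (auto simp: vec_eq_iff vert_comp toggle_def)
  then show ?thesis by (metis inner_add_right)
qed

lemma affine_incr:
  fixes g :: "'n::finite set" and c :: "'n \<Rightarrow> real"
  shows "\<exists>a c0. \<forall>x. a \<bullet> vert x + c0 = b + (\<Sum>k\<in>sd x g. c k)"
proof -
  define a :: "real^'n" where "a = (\<chi> k. if k \<in> g then - c k else c k)"
  define c0 where "c0 = b + (\<Sum>k\<in>g. c k)"
  have "a \<bullet> vert x + c0 = b + (\<Sum>k\<in>sd x g. c k)" for x
  proof -
    have e1: "(\<Sum>k\<in>x. a $ k) = (\<Sum>k\<in>UNIV. if k \<in> x then (if k \<in> g then - c k else c k) else 0)"
      by (simp add: a_def sum.If_cases)
    have e2: "(\<Sum>k\<in>g. c k) = (\<Sum>k\<in>UNIV. if k \<in> g then c k else 0)"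
      by (simp add: sum.If_cases)
    have e3: "(\<Sum>k\<in>sd x g. c k) = (\<Sum>k\<in>UNIV. if k \<in> sd x g then c k else 0)"
      by (simp add: sum.If_cases)
    have "(\<Sum>k\<in>x. a $ k) + (\<Sum>k\<in>g. c k) = (\<Sum>k\<in>sd x g. c k)"
      unfolding e1 e2 e3 sum.distrib[symmetric]
      by (rule sum.cong) (auto simp: sd_def)
    then show ?thesis by (simp add: inner_vert c0_def)
  qed
  then show ?thesis by blast
qed


lemma card_UNIV_sets: "card (UNIV :: 'n::finite set set) = 2 ^ CARD('n)"
proof -
  have "(UNIV :: 'n set set) = Pow UNIV" by simp
  then show ?thesis by (simp add: card_Pow)
qed

lemma inj_toggle: "inj (toggle k)"
  by (metis injI toggle_toggle)

lemma peak_gt: "peak w g \<Longrightarrow> w (toggle k g) < w g"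
  unfolding peak_def using hamming1_iff by blast

definition alt :: "('n::finite set \<Rightarrow> real) \<Rightarrow> bool" where
  "alt w \<longleftrightarrow> (\<forall>g k. peak w (toggle k g) \<longleftrightarrow> \<not> peak w g)"

lemma haldane_alt:
  assumes h: "haldane w" and L: "CARD('n::finite) \<ge> 1"
  shows "alt (w :: 'n set \<Rightarrow> real)"
  unfolding alt_def
proof (intro allI)
  fix g :: "'n set" and k
  define P where "P = {g. peak w g}"
  have cP: "card P = 2 ^ (CARD('n) - 1)" using h by (simp add: haldane_def P_def)
  have disj: "P \<inter> toggle k ` P = {}"
  proof (rule ccontr)
    assume "P \<inter> toggle k ` P \<noteq> {}"
    then obtain x where x: "x \<in> P" "x \<in> toggle k ` P" by blast
    then obtain y where y: "y \<in> P" "x = toggle k y" by blast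
    have "w (toggle k y) < w y" using y peak_gt unfolding P_def by blast
    moreover have "w (toggle k x) < w x" using x peak_gt unfolding P_def by blast
    ultimately show False using y by simp
  qed
  have c2: "card (toggle k ` P) = card P"
    by (rule card_image) (meson inj_toggle inj_on_subset subset_UNIV)
  have "card (P \<union> toggle k ` P) = card P + card (toggle k ` P)"
    by (rule card_Un_disjoint) (use disj in auto)
  also have "\<dots> = 2 ^ CARD('n)"
    using cP c2 L by (metis mult_2 power_Suc Suc_diff_1 less_le_trans zero_less_one le_less)
  finally have "P \<union> toggle k ` P = UNIV"
    by (metis card_UNIV_sets card_seteq finite subset_UNIV order_refl)
  then have "g \<in> P \<or> g \<in> toggle k ` P" by blast
  then have 1: "peak w g \<or> peak w (toggle k g)"
    unfolding P_def by (metis image_iff mem_Collect_eq toggle_toggle)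
  have 2: "\<not> (peak w g \<and> peak w (toggle k g))"
    using disj unfolding P_def by (metis disjoint_iff image_eqI mem_Collect_eq toggle_toggle)
  show "peak w (toggle k g) \<longleftrightarrow> \<not> peak w g" using 1 2 by blast
qed

lemma altD: "alt w \<Longrightarrow> peak w (toggle k g) \<longleftrightarrow> \<not> peak w g"
  by (simp add: alt_def)

lemma upper_faceE:
  assumes "upper_face w S"
  obtains a c where "\<forall>x. w x \<le> a \<bullet> vert x + c" "S = {x. w x = a \<bullet> vert x + c}"
  using assms unfolding upper_face_def by blast

lemma nonpeak_sep:
  assumes al: "alt w" and np: "\<not> peak w v" and ij: "i \<noteq> j" and uf: "upper_face w S"
    and v: "v \<in> S" and v2: "toggle j (toggle i v) \<in> S"
  shows False
proof -
  obtain a c where f: "\<forall>x. w x \<le> a \<bullet> vert x + c" and S: "S = {x. w x = a \<bullet> vert x + c}"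
    using uf by (rule upper_faceE)
  have pi: "peak w (toggle i v)" and pj: "peak w (toggle j v)" using al np unfolding alt_def by blast+
  have "w (toggle i (toggle i v)) < w (toggle i v)" using pi by (rule peak_gt)
  then have l1: "w v < w (toggle i v)" by simp
  have l2: "w (toggle j (toggle i v)) < w (toggle j v)"
    using peak_gt[OF pj, of i] by (simp add: toggle_comm)
  have e1: "w v = a \<bullet> vert v + c" using v S by blast
  have e2: "w (toggle j (toggle i v)) = a \<bullet> vert (toggle j (toggle i v)) + c" using v2 S by blast
  have "w (toggle i v) \<le> a \<bullet> vert (toggle i v) + c" "w (toggle j v) \<le> a \<bullet> vert (toggle j v) + c"
    using f by blast+
  then show False using parallelogram[OF ij, of a v] e1 e2 l1 l2 by linarith
qed

lemma nonpeak_isolated: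
  assumes "alt w" "\<not> peak w v"
  shows "isolated (induced_cells w) v"
  unfolding isolated_def
proof
  assume "\<exists>g' S. hamming v g' = 2 \<and> S \<in> induced_cells w \<and> v \<in> S \<and> g' \<in> S"
  then obtain g' S where "hamming v g' = 2" "S \<in> induced_cells w" "v \<in> S" "g' \<in> S" by blast
  moreover then obtain i j where "i \<noteq> j" "g' = toggle j (toggle i v)"
    using hamming2_iff by blast
  ultimately show False using nonpeak_sep[OF assms] by (auto simp: induced_cells_def)
qed


lemma toggle_inner_diff:
  fixes d :: "real^'n::finite"
  shows "d \<bullet> vert (toggle k g) - d \<bullet> vert g = (if k \<in> g then - (d $ k) else d $ k)"
proof (cases "k \<in> g")
  case True
  then have "(\<Sum>i\<in>g. d $ i) = d $ k + (\<Sum>i\<in>g - {k}. d $ i)"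
    by (simp add: sum.remove)
  then show ?thesis using True by (simp add: inner_vert toggle_def)
next
  case False
  then show ?thesis by (simp add: inner_vert toggle_def)
qed

lemma cell_exists:
  fixes w :: "'n::finite set \<Rightarrow> real"
  assumes f0: "\<forall>x. w x \<le> a0 \<bullet> vert x + c0" and gA: "g \<in> A"
    and A0: "A \<subseteq> {x. w x = a0 \<bullet> vert x + c0}"
  shows "\<exists>S\<in>induced_cells w. A \<subseteq> S"
proof -
  define Om where "Om = {T. upper_face w T \<and> A \<subseteq> T}"
  have fin: "finite Om" by simp
  have "{x. w x = a0 \<bullet> vert x + c0} \<in> Om"
    unfolding Om_def upper_face_def using f0 A0 by blast
  then have ne: "Om \<noteq> {}" by blast
  obtain T where T: "T \<in> Om" and mx: "\<And>T'. T' \<in> Om \<Longrightarrow> T \<subseteq> T' \<Longrightarrow> T' = T"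
    using finite_has_maximal[OF fin ne] by blast
  have ufT: "upper_face w T" and AT: "A \<subseteq> T" using T by (auto simp: Om_def)
  obtain a1 c1 where f1: "\<forall>x. w x \<le> a1 \<bullet> vert x + c1" and T1: "T = {x. w x = a1 \<bullet> vert x + c1}"
    using ufT by (rule upper_faceE)
  have gT: "g \<in> T" using gA AT by blast
  have "aff_dim (vert ` T) = int CARD('n)"
  proof (rule ccontr)
    assume ne2: "aff_dim (vert ` T) \<noteq> int CARD('n)"
    have "aff_dim (vert ` T) \<le> int CARD('n)" using aff_dim_le_DIM[of "vert ` T"] by simp
    then have lt: "aff_dim (vert ` T) < int CARD('n)" using ne2 by simp
    have "vert g \<in> affine hull (vert ` T)" using gT by (simp add: hull_inc)
    then have "aff_dim (vert ` T) = int (dim ((+) (- vert g) ` vert ` T))" by (rule aff_dim_eq_dim)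
    then have "dim ((+) (- vert g) ` vert ` T) < DIM(real^'n)" using lt by simp
    then obtain d :: "real^'n" where d0: "d \<noteq> 0" and dsp: "span ((+) (- vert g) ` vert ` T) \<subseteq> {x. d \<bullet> x = 0}"
      using lowdim_subset_hyperplane by blast
    have dT: "d \<bullet> vert t = d \<bullet> vert g" if "t \<in> T" for t
    proof -
      have "- vert g + vert t \<in> span ((+) (- vert g) ` vert ` T)"
        using that by (intro span_base) blast
      then have "d \<bullet> (- vert g + vert t) = 0" using dsp by blast
      then show ?thesis by (simp add: inner_diff_right)
    qed
    obtain k where dk: "d $ k \<noteq> 0" using d0 by (metis vec_eq_iff zero_index)
    define z where "z = toggle k g"
    have hz: "d \<bullet> vert z - d \<bullet> vert g \<noteq> 0"
      unfolding z_def toggle_inner_diff using dk by simp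
    define \<sigma> :: real where "\<sigma> = (if d \<bullet> vert z - d \<bullet> vert g < 0 then 1 else -1)"
    define h where "h x = \<sigma> * (d \<bullet> vert x - d \<bullet> vert g)" for x
    have hz': "h z < 0" using hz by (auto simp: h_def \<sigma>_def)
    have hT: "h t = 0" if "t \<in> T" for t using dT[OF that] by (simp add: h_def)
    define N where "N = {x. h x < 0}"
    define r where "r x = (a1 \<bullet> vert x + c1 - w x) / (- h x)" for x
    define s where "s = Min (r ` N)"
    have finN: "finite N" by simp
    have zN: "z \<in> N" using hz' by (simp add: N_def)
    have rpos: "r x > 0" if "x \<in> N" for x
    proof -
      have "x \<notin> T" using that hT by (force simp: N_def)
      then have "w x < a1 \<bullet> vert x + c1" using f1 T1 by (metis (mono_tags) mem_Collect_eq order_less_le)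
      then show ?thesis using that by (simp add: r_def N_def divide_pos_neg)
    qed
    have sin: "s \<in> r ` N" unfolding s_def using finN zN by (intro Min_in) auto
    have sle: "s \<le> r x" if "x \<in> N" for x unfolding s_def using finN that by (intro Min_le) auto
    have spos: "s > 0" using sin rpos by blast
    define a2 where "a2 = a1 + scaleR (s * \<sigma>) d"
    define c2 where "c2 = c1 - s * \<sigma> * (d \<bullet> vert g)"
    have f2eq: "a2 \<bullet> vert x + c2 = a1 \<bullet> vert x + c1 + s * h x" for x
      by (simp add: a2_def c2_def h_def inner_add_left algebra_simps)
    have f2: "\<forall>x. w x \<le> a2 \<bullet> vert x + c2"
    proof
      fix x
      show "w x \<le> a2 \<bullet> vert x + c2"
      proof (cases "x \<in> N")
        case True
        have "s \<le> (a1 \<bullet> vert x + c1 - w x) / (- h x)" using sle[OF True] by (simp add: r_def)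
        moreover have "- h x > 0" using True by (simp add: N_def)
        ultimately have "s * (- h x) \<le> a1 \<bullet> vert x + c1 - w x" using pos_le_divide_eq by blast
        then show ?thesis unfolding f2eq by (simp add: algebra_simps)
      next
        case False
        then have "h x \<ge> 0" by (simp add: N_def)
        then have "s * h x \<ge> 0" using spos by simp
        then show ?thesis unfolding f2eq using f1 by (smt (verit))
      qed
    qed
    define T2 where "T2 = {x. w x = a2 \<bullet> vert x + c2}"
    have uf2: "upper_face w T2" unfolding upper_face_def T2_def using f2 by blast
    have TT2: "T \<subseteq> T2" unfolding T2_def f2eq using hT T1 by auto
    obtain x where xN: "x \<in> N" and rx: "s = r x" using sin by blast
    have "x \<in> T2"
    proof -
      have "- h x > 0" using xN by (simp add: N_def)
      then have "s * (- h x) = a1 \<bullet> vert x + c1 - w x" using rx by (simp add: r_def)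
      then show ?thesis unfolding T2_def f2eq by (simp add: algebra_simps)
    qed
    moreover have "x \<notin> T" using xN hT by (force simp: N_def)
    moreover have "T2 \<in> Om" using uf2 TT2 AT by (auto simp: Om_def)
    ultimately show False using mx TT2 by blast
  qed
  then show ?thesis using ufT AT by (auto simp: induced_cells_def)
qed


lemma sd_empty_eq: "sd x g = {} \<Longrightarrow> x = g"
  by (auto simp: sd_def)

lemma sum_split_ij:
  fixes c :: "'n \<Rightarrow> real"
  assumes ij: "i \<noteq> j" and fD: "finite D" and cM: "\<And>k. k \<noteq> i \<Longrightarrow> k \<noteq> j \<Longrightarrow> c k = M"
  shows "(\<Sum>k\<in>D. c k) = (if i \<in> D then c i else 0) + (if j \<in> D then c j else 0) + M * card (D - {i, j})"
proof -
  have "D = (D \<inter> {i, j}) \<union> (D - {i, j})" by blast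
  then have "(\<Sum>k\<in>D. c k) = (\<Sum>k\<in>D \<inter> {i, j}. c k) + (\<Sum>k\<in>D - {i, j}. c k)"
    using fD by (metis Diff_disjoint Int_Diff_disjoint finite_Diff finite_Int sum.union_disjoint inf_commute)
  also have "(\<Sum>k\<in>D - {i, j}. c k) = (\<Sum>k\<in>D - {i, j}. M)" using cM by (intro sum.cong) auto
  also have "\<dots> = M * card (D - {i, j})" by simp
  also have "(\<Sum>k\<in>D \<inter> {i, j}. c k) = (if i \<in> D then c i else 0) + (if j \<in> D then c j else 0)"
  proof -
    consider "i \<in> D" "j \<in> D" | "i \<in> D" "j \<notin> D" | "i \<notin> D" "j \<in> D" | "i \<notin> D" "j \<notin> D" by blast
    then show ?thesis
    proof cases
      case 1 then have "D \<inter> {i, j} = {i, j}" by blast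
      then show ?thesis using 1 ij by simp
    next
      case 2 then have "D \<inter> {i, j} = {i}" by blast
      then show ?thesis using 2 by simp
    next
      case 3 then have "D \<inter> {i, j} = {j}" by blast
      then show ?thesis using 3 by simp
    next
      case 4 then have "D \<inter> {i, j} = {}" by blast
      then show ?thesis using 4 by simp
    qed
  qed
  finally show ?thesis .
qed

lemma abs_le_B: "\<bar>(w::'n::finite set \<Rightarrow> real) y\<bar> \<le> (\<Sum>x\<in>UNIV. \<bar>w x\<bar>)"
  by (rule member_le_sum) auto

lemma peak_pair_cell:
  fixes w :: "'n::finite set \<Rightarrow> real"
  assumes al: "alt w" and pg: "peak w g" and ij: "i \<noteq> j"
  shows "\<exists>S\<in>induced_cells w. {g, toggle j (toggle i g)} \<subseteq> S"
proof -
  define gi where "gi = toggle i g"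
  define gj where "gj = toggle j g"
  define g' where "g' = toggle j (toggle i g)"
  have pg': "peak w g'" using al pg unfolding alt_def g'_def by blast
  have w1: "w gi < w g" using peak_gt[OF pg] by (simp add: gi_def)
  have "w (toggle i g') < w g'" using peak_gt[OF pg'] .
  then have w2: "w gj < w g'" by (simp add: g'_def gj_def toggle_comm[of j i])
  define B where "B = (\<Sum>x\<in>UNIV. \<bar>w x\<bar>)"
  have wB: "\<bar>w y\<bar> \<le> B" for y unfolding B_def by (rule abs_le_B)
  define ci where "ci = w gi - w g"
  define cj where "cj = w g' - w gi"
  define M where "M = 6 * B"
  define c where "c k = (if k = i then ci else if k = j then cj else M)" for k
  have ci: "c i = ci" and cj: "c j = cj" using ij by (auto simp: c_def)
  have cM: "c k = M" if "k \<noteq> i" "k \<noteq> j" for k using that by (simp add: c_def)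
  obtain a c0 where fa: "\<forall>x. a \<bullet> vert x + c0 = w g + (\<Sum>k\<in>sd x g. c k)"
    using affine_incr by blast
  have fx: "a \<bullet> vert x + c0 = w g + (if i \<in> sd x g then ci else 0) + (if j \<in> sd x g then cj else 0)
      + M * card (sd x g - {i, j})" for x
    using fa sum_split_ij[OF ij _ cM, of "sd x g"] ci cj by simp
  have sdg': "sd g' g = {i, j}" using ij by (intro set_eqI) (simp add: g'_def mem_sd mem_toggle)
  have sdgi: "sd gi g = {i}" by (intro set_eqI) (simp add: gi_def mem_sd mem_toggle)
  have sdgj: "sd gj g = {j}" by (intro set_eqI) (simp add: gj_def mem_sd mem_toggle)
  have eg: "a \<bullet> vert g + c0 = w g" using fx[of g] by (simp add: sd_def)
  have eg': "a \<bullet> vert g' + c0 = w g'" using fx[of g'] sdg' ij by (simp add: ci_def cj_def)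
  have ge: "w x \<le> a \<bullet> vert x + c0" for x
  proof (cases "sd x g - {i, j} = {}")
    case False
    then have "card (sd x g - {i, j}) \<ge> 1" by (simp add: Suc_le_eq card_gt_0_iff)
    then have "real (card (sd x g - {i, j})) \<ge> 1" by simp
    moreover have "M \<ge> 0" using wB[of g] by (simp add: M_def)
    ultimately have "M * card (sd x g - {i, j}) \<ge> M" using mult_left_mono[of 1 "real (card (sd x g - {i, j}))" M] by simp
    moreover have "\<bar>ci\<bar> \<le> 2 * B" "\<bar>cj\<bar> \<le> 2 * B" using wB[of g] wB[of gi] wB[of g'] by (auto simp: ci_def cj_def)
    moreover have "\<bar>w g\<bar> \<le> B" "\<bar>w x\<bar> \<le> B" using wB by auto
    ultimately show ?thesis unfolding fx M_def by (smt (verit))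
  next
    case True
    then have sub: "sd x g \<subseteq> {i, j}" by blast
    consider "i \<in> sd x g" "j \<in> sd x g" | "i \<in> sd x g" "j \<notin> sd x g" | "i \<notin> sd x g" "j \<in> sd x g"
      | "i \<notin> sd x g" "j \<notin> sd x g" by blast
    then show ?thesis
    proof cases
      case 1 then have "sd g x = {i, j}" using sub by (auto simp: sd_commute)
      then have "x = g'" using sd_eq_two[OF _ ij] by (simp add: g'_def)
      then show ?thesis using eg' by simp
    next
      case 2 then have "sd g x = {i}" using sub by (auto simp: sd_commute)
      then have "x = gi" using sd_eq_single by (simp add: gi_def)
      then show ?thesis using fx[of x] sdgi ij by (simp add: ci_def)
    next
      case 3 then have "sd g x = {j}" using sub by (auto simp: sd_commute)
      then have "x = gj" using sd_eq_single by (simp add: gj_def)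
      then show ?thesis using fx[of x] sdgj ij w1 w2 by (simp add: cj_def)
    next
      case 4 then have "sd x g = {}" using sub by auto
      then have "x = g" by (rule sd_empty_eq)
      then show ?thesis using eg by simp
    qed
  qed
  show ?thesis
    by (rule cell_exists[of w a c0 g]) (use ge eg eg' in \<open>auto simp: g'_def\<close>)
qed

lemma peak_not_isolated:
  fixes w :: "'n::finite set \<Rightarrow> real"
  assumes "alt w" "peak w g" "(i::'n::finite) \<noteq> j"
  shows "\<not> isolated (induced_cells w) g"
proof -
  obtain S where "S \<in> induced_cells w" "{g, toggle j (toggle i g)} \<subseteq> S"
    using peak_pair_cell[OF assms] by blast
  moreover have "hamming g (toggle j (toggle i g)) = 2" using assms(3) hamming2_iff by blast
  ultimately show ?thesis unfolding isolated_def by blast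
qed


lemma two_loci:
  assumes "CARD('n::finite) \<ge> 2"
  shows "\<exists>i j :: 'n. i \<noteq> j"
proof -
  obtain i :: 'n where True by blast
  have "card (UNIV - {i}) \<ge> 1" using assms by (simp add: card_Diff_singleton)
  then obtain j where "j \<in> UNIV - {i}" by (metis card.empty ex_in_conv not_one_le_zero)
  then show ?thesis by blast
qed

lemma part1:
  fixes w :: "'n::finite set \<Rightarrow> real"
  assumes L: "CARD('n) \<ge> 2" and h: "haldane w"
  shows "card {g. isolated (induced_cells w) g} = 2 ^ (CARD('n) - 1)"
proof -
  have al: "alt w" using haldane_alt[OF h] L by simp
  obtain i j :: 'n where ij: "i \<noteq> j" using two_loci[OF L] by blast
  have eq: "{g. isolated (induced_cells w) g} = UNIV - {g. peak w g}"
    using nonpeak_isolated[OF al] peak_not_isolated[OF al _ ij] by blast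
  have "card (UNIV - {g. peak w g}) = card (UNIV :: 'n set set) - card {g. peak w g}"
    by (rule card_Diff_subset) auto
  also have "\<dots> = 2 ^ CARD('n) - 2 ^ (CARD('n) - 1)"
    using h by (simp add: card_UNIV_sets haldane_def)
  also have "\<dots> = 2 ^ (CARD('n) - 1)"
  proof -
    have "CARD('n) = Suc (CARD('n) - 1)" using L by simp
    then have "(2::nat) ^ CARD('n) = 2 * 2 ^ (CARD('n) - 1)" by (metis power_Suc)
    then show ?thesis by simp
  qed
  finally show ?thesis using eq by simp
qed

lemma hamming_take:
  assumes d: "distinct xs" and km: "k \<le> m" and ml: "m \<le> length xs"
  shows "hamming (set (take k xs)) (set (take m xs)) = m - k"
proof -
  define ys where "ys = take m xs"
  have dys: "distinct ys" using d by (simp add: ys_def)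
  have tk: "take k ys = take k xs" using km by (simp add: ys_def min_def)
  have split: "ys = take k ys @ drop k ys" by simp
  then have disj: "set (take k ys) \<inter> set (drop k ys) = {}" using dys
    by (metis distinct_append)
  have un: "set ys = set (take k ys) \<union> set (drop k ys)" by (metis split set_append)
  have "sd (set (take k ys)) (set ys) = set (drop k ys)" using disj un by (auto simp: sd_def)
  moreover have "card (set (drop k ys)) = m - k"
    using dys ml by (simp add: distinct_card ys_def)
  ultimately show ?thesis by (metis hamming_sd tk ys_def)
qed

lemma cube_sym_sd: "cube_sym p F a = p ` sd a F"
  by (simp add: cube_sym_def sd_def)

lemma cube_sym_hamming:
  assumes "bij p"
  shows "hamming (cube_sym p F a) (cube_sym p F b) = hamming a b"
proof -
  have inj: "inj p" using assms bij_is_inj by blast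
  have "sd (p ` sd a F) (p ` sd b F) = p ` sd (sd a F) (sd b F)"
    unfolding sd_def using inj by (simp add: image_Un image_set_diff)
  moreover have "sd (sd a F) (sd b F) = sd a b" by (auto simp: sd_def)
  moreover have "card (p ` sd a b) = card (sd a b)" using inj by (simp add: card_image inj_on_subset)
  ultimately show ?thesis by (simp add: hamming_sd cube_sym_sd)
qed

lemma part2:
  fixes w :: "'n::finite set \<Rightarrow> real"
  assumes L: "CARD('n) \<ge> 3" and h: "haldane w" and st: "staircase (induced_cells w)"
  shows False
proof -
  have al: "alt w" using haldane_alt[OF h] L by simp
  obtain p F where bp: "bij p" and T: "induced_cells w = (\<lambda>S. cube_sym p F ` S) ` standard_staircase"
    using st unfolding staircase_def by blast
  obtain xs :: "'n list" where xs: "distinct xs" "set xs = UNIV"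
    using finite_distinct_list[of "UNIV :: 'n set"] by auto
  have lxs: "length xs = CARD('n)" using xs by (metis distinct_card)
  define C where "C = {set (take k xs) | k. k \<le> length xs}"
  have "C \<in> standard_staircase" unfolding standard_staircase_def C_def
    by (intro CollectI exI[of _ xs] conjI) (simp_all add: xs)
  then have CT: "cube_sym p F ` C \<in> induced_cells w" unfolding T by (rule imageI)
  define v where "v k = cube_sym p F (set (take k xs))" for k
  have vC: "v k \<in> cube_sym p F ` C" if "k \<le> CARD('n)" for k
  proof -
    have "set (take k xs) \<in> C" unfolding C_def using that lxs
      by (intro CollectI exI[of _ k] conjI refl) simp
    then show ?thesis unfolding v_def by (rule imageI)
  qed
  have hv: "hamming (v k) (v m) = m - k" if "k \<le> m" "m \<le> CARD('n)" for k m
    unfolding v_def cube_sym_hamming[OF bp] using hamming_take[OF xs(1)] that lxs by simp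
  have "hamming (v 0) (v 1) = 1" using hv[of 0 1] L by simp
  from hamming1_iff[THEN iffD1, OF this] obtain k where v1: "v 1 = toggle k (v 0)" by (elim exE)
  have "\<not> peak w (v 0) \<or> \<not> peak w (v 1)" unfolding v1 altD[OF al] by simp
  then show False
  proof
    assume np: "\<not> peak w (v 0)"
    have "isolated (induced_cells w) (v 0)" by (rule nonpeak_isolated[OF al np])
    moreover have "hamming (v 0) (v 2) = 2" using hv[of 0 2] L by simp
    moreover have "v 0 \<in> cube_sym p F ` C" "v 2 \<in> cube_sym p F ` C" using vC L by auto
    ultimately show False using CT unfolding isolated_def by blast
  next
    assume np: "\<not> peak w (v 1)"
    have "isolated (induced_cells w) (v 1)" by (rule nonpeak_isolated[OF al np])
    moreover have "hamming (v 1) (v 3) = 2" using hv[of 1 3] L by simp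
    moreover have "v 1 \<in> cube_sym p F ` C" "v 3 \<in> cube_sym p F ` C" using vC L by auto
    ultimately show False using CT unfolding isolated_def by blast
  qed
qed


lemma parity_toggle: "even (card (toggle k (g::'n::finite set))) \<longleftrightarrow> \<not> even (card g)"
proof (cases "k \<in> g")
  case True
  then have "card g \<ge> 1" by (metis One_nat_def Suc_leI card_gt_0_iff empty_iff finite)
  moreover have "card (toggle k g) = card g - 1" using True by (simp add: toggle_def)
  ultimately show ?thesis by (metis Suc_diff_1 even_Suc less_le_trans zero_less_one le_less)
next
  case False
  then show ?thesis by (simp add: toggle_def)
qed

lemma card_parity:
  assumes L: "CARD('n::finite) \<ge> 1"
  shows "card {g::'n set. even (card g)} = 2 ^ (CARD('n) - 1)"
    and "card {g::'n set. odd (card g)} = 2 ^ (CARD('n) - 1)"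
proof -
  obtain i :: 'n where True by blast
  define E where "E = {g::'n set. even (card g)}"
  define Od where "Od = {g::'n set. odd (card g)}"
  have "toggle i ` E = Od"
  proof
    show "toggle i ` E \<subseteq> Od" by (auto simp: E_def Od_def parity_toggle)
    show "Od \<subseteq> toggle i ` E"
    proof
      fix x assume "x \<in> Od"
      then have "toggle i x \<in> E" by (simp add: E_def Od_def parity_toggle)
      then show "x \<in> toggle i ` E" by (metis image_eqI toggle_toggle)
    qed
  qed
  then have cEO: "card Od = card E" by (metis card_image inj_on_subset inj_toggle subset_UNIV)
  have "E \<union> Od = UNIV" "E \<inter> Od = {}" by (auto simp: E_def Od_def)
  then have "card E + card Od = 2 ^ CARD('n)"
    by (metis card_UNIV_sets card_Un_disjoint finite)
  moreover have "(2::nat) ^ CARD('n) = 2 * 2 ^ (CARD('n) - 1)"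
    using L by (metis Suc_diff_1 less_le_trans zero_less_one le_less power_Suc)
  ultimately have "card E = 2 ^ (CARD('n) - 1)" using cEO by simp
  then show "card {g::'n set. even (card g)} = 2 ^ (CARD('n) - 1)"
    and "card {g::'n set. odd (card g)} = 2 ^ (CARD('n) - 1)"
    using cEO by (simp_all add: E_def Od_def)
qed

definition depv :: "'n::finite set set \<Rightarrow> ('n set \<Rightarrow> real) \<Rightarrow> bool" where
  "depv C \<mu> \<longleftrightarrow> (\<forall>x. x \<notin> C \<longrightarrow> \<mu> x = 0) \<and> sum \<mu> UNIV = 0
     \<and> (\<Sum>x\<in>UNIV. scaleR (\<mu> x) (vert x)) = 0 \<and> (\<exists>x. \<mu> x \<noteq> 0)"

lemma dep_from_affdep:
  assumes "affine_dependent (vert ` (S::'n::finite set set))"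
  shows "\<exists>\<mu>. depv S \<mu>"
proof -
  have injv: "inj_on vert S" by (meson inj_onI vert_inj)
  obtain U where U1: "sum U (vert ` S) = 0" and U2: "\<exists>v\<in>vert ` S. U v \<noteq> 0"
    and U3: "sum (\<lambda>v. scaleR (U v) v) (vert ` S) = 0"
    using assms affine_dependent_explicit_finite[of "vert ` S"] by auto
  define \<mu> where "\<mu> x = (if x \<in> S then U (vert x) else 0)" for x
  have "sum \<mu> UNIV = (\<Sum>x\<in>S. U (vert x))" by (simp add: \<mu>_def sum.If_cases)
  also have "\<dots> = sum U (vert ` S)" using injv by (simp add: sum.reindex)
  finally have s1: "sum \<mu> UNIV = 0" using U1 by simp
  have "(\<Sum>x\<in>UNIV. scaleR (\<mu> x) (vert x)) = (\<Sum>x\<in>UNIV. if x \<in> S then scaleR (U (vert x)) (vert x) else 0)"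
    by (rule sum.cong) (auto simp: \<mu>_def)
  also have "\<dots> = (\<Sum>x\<in>S. scaleR (U (vert x)) (vert x))" by (simp add: sum.If_cases)
  also have "\<dots> = sum (\<lambda>v. scaleR (U v) v) (vert ` S)" using injv by (simp add: sum.reindex)
  finally have s2: "(\<Sum>x\<in>UNIV. scaleR (\<mu> x) (vert x)) = 0" using U3 by simp
  have s3: "\<exists>x. \<mu> x \<noteq> 0" using U2 by (auto simp: \<mu>_def)
  have "depv S \<mu>" unfolding depv_def using s1 s2 s3 by (auto simp: \<mu>_def)
  then show ?thesis by blast
qed

lemma dep_sum_zero:
  fixes w :: "'n::finite set \<Rightarrow> real"
  assumes d: "depv S \<mu>" and uf: "upper_face w S"
  shows "(\<Sum>x\<in>UNIV. \<mu> x * w x) = 0"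
proof -
  obtain a c where f: "\<forall>x. w x \<le> a \<bullet> vert x + c" and S: "S = {x. w x = a \<bullet> vert x + c}"
    using uf by (rule upper_faceE)
  have "(\<Sum>x\<in>UNIV. \<mu> x * w x) = (\<Sum>x\<in>UNIV. a \<bullet> scaleR (\<mu> x) (vert x) + c * \<mu> x)"
  proof (rule sum.cong)
    fix x :: "'n set"
    show "\<mu> x * w x = a \<bullet> scaleR (\<mu> x) (vert x) + c * \<mu> x"
    proof (cases "x \<in> S")
      case True
      then have "w x = a \<bullet> vert x + c" using S by blast
      then show ?thesis by (simp add: algebra_simps)
    next
      case False
      then show ?thesis using d by (simp add: depv_def)
    qed
  qed simp
  also have "\<dots> = a \<bullet> (\<Sum>x\<in>UNIV. scaleR (\<mu> x) (vert x)) + c * sum \<mu> UNIV"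
    by (simp add: sum.distrib inner_sum_right sum_distrib_left)
  also have "\<dots> = 0" using d by (simp add: depv_def)
  finally show ?thesis .
qed

lemma poly_avoid:
  fixes N :: "('n::finite set \<Rightarrow> real) set" and idx :: "'n set \<Rightarrow> nat" and w0 :: "'n set \<Rightarrow> real"
  assumes fN: "finite N" and nz: "\<forall>\<nu>\<in>N. \<exists>x. \<nu> x \<noteq> 0" and inj: "inj idx"
  shows "finite {t::real. \<exists>\<nu>\<in>N. (\<Sum>x\<in>UNIV. \<nu> x * (w0 x + t ^ Suc (idx x))) = 0}"
proof -
  have fin1: "finite {t::real. (\<Sum>x\<in>UNIV. \<nu> x * (w0 x + t ^ Suc (idx x))) = 0}" if nuN: "\<nu> \<in> N" for \<nu>
  proof -
    obtain x0 where x0: "\<nu> x0 \<noteq> 0" using bspec[OF nz nuN] by (elim exE)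
    define p where "p = [:(\<Sum>x\<in>UNIV. \<nu> x * w0 x):] + (\<Sum>x\<in>UNIV. monom (\<nu> x) (Suc (idx x)))"
    have pe: "poly p t = (\<Sum>x\<in>UNIV. \<nu> x * (w0 x + t ^ Suc (idx x)))" for t
      by (simp add: p_def poly_sum poly_monom distrib_left sum.distrib)
    have "coeff p (Suc (idx x0)) = (\<Sum>x\<in>UNIV. if Suc (idx x) = Suc (idx x0) then \<nu> x else 0)"
      by (simp add: p_def coeff_sum)
    also have "\<dots> = (\<Sum>x\<in>UNIV. if x = x0 then \<nu> x else 0)"
    proof (rule sum.cong)
      fix x :: "'n set"
      have "Suc (idx x) = Suc (idx x0) \<longleftrightarrow> x = x0" using inj by (auto simp: inj_eq)
      then show "(if Suc (idx x) = Suc (idx x0) then \<nu> x else 0) = (if x = x0 then \<nu> x else 0)" by simp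
    qed simp
    also have "\<dots> = \<nu> x0" by simp
    finally have "p \<noteq> 0" using x0 by auto
    then have "finite {t. poly p t = 0}" by (rule poly_roots_finite)
    then show ?thesis using pe by simp
  qed
  have "finite (\<Union>\<nu>\<in>N. {t::real. (\<Sum>x\<in>UNIV. \<nu> x * (w0 x + t ^ Suc (idx x))) = 0})"
    by (rule finite_UN_I[OF fN fin1])
  moreover have "{t::real. \<exists>\<nu>\<in>N. (\<Sum>x\<in>UNIV. \<nu> x * (w0 x + t ^ Suc (idx x))) = 0}
      = (\<Union>\<nu>\<in>N. {t::real. (\<Sum>x\<in>UNIV. \<nu> x * (w0 x + t ^ Suc (idx x))) = 0})" by auto
  ultimately show ?thesis by simp
qed


lemma corner_affdim:
  "aff_dim (vert ` insert (v::'n::finite set) {h. hamming v h = 1}) = int CARD('n)"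
proof -
  define K where "K = insert (v::'n set) {h. hamming v h = 1}"
  define X where "X = (+) (- vert v) ` vert ` K"
  have "vert v \<in> affine hull (vert ` K)" by (simp add: K_def hull_inc)
  then have ad: "aff_dim (vert ` K) = int (dim X)" unfolding X_def by (rule aff_dim_eq_dim)
  have axX: "axis k 1 \<in> span X" for k
  proof -
    have "toggle k v \<in> K" unfolding K_def using hamming1_iff by blast
    then have "- vert v + vert (toggle k v) \<in> X" unfolding X_def by blast
    then have "scaleR (if k \<in> v then -1 else 1) (- vert v + vert (toggle k v)) \<in> span X"
      by (intro span_scale span_base)
    moreover have "scaleR (if k \<in> v then -1 else 1) (- vert v + vert (toggle k v)) = (axis k 1 :: real^'n)"
      by (auto simp: vec_eq_iff vert_comp toggle_def axis_def)
    ultimately show ?thesis by simp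
  qed
  have "Basis \<subseteq> span X"
  proof
    fix b :: "real^'n" assume "b \<in> Basis"
    then obtain k where "b = axis k 1" unfolding Basis_vec_def by auto
    then show "b \<in> span X" using axX by simp
  qed
  then have "span Basis \<subseteq> span X" by (metis span_mono span_span)
  then have "span X = UNIV" by auto
  then have "dim X = DIM(real^'n)" by (metis dim_UNIV dim_span)
  then show ?thesis using ad by (simp add: K_def)
qed

lemma corner_face:
  fixes w :: "'n::finite set \<Rightarrow> real"
  assumes ev: "\<And>x. even (card x) \<Longrightarrow> 1 \<le> w x \<and> w x < 11/10"
    and od: "\<And>x. odd (card x) \<Longrightarrow> 0 \<le> w x \<and> w x < 1/10"
    and v: "odd (card v)"
  shows "insert v {h. hamming v h = 1} \<in> induced_cells w"
proof -
  define K where "K = insert v {h. hamming v h = 1}"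
  define c where "c k = w (toggle k v) - w v" for k
  have c9: "c k \<ge> 9/10" for k
  proof -
    have "even (card (toggle k v))" using v parity_toggle by blast
    then show ?thesis using ev[of "toggle k v"] od[OF v] by (simp add: c_def)
  qed
  obtain a c0 where fa: "\<forall>x. a \<bullet> vert x + c0 = w v + (\<Sum>k\<in>sd x v. c k)"
    using affine_incr by blast
  have key: "w x \<le> a \<bullet> vert x + c0 \<and> (w x = a \<bullet> vert x + c0 \<longleftrightarrow> x \<in> K)" for x
  proof -
    have hx: "hamming v x = card (sd x v)" by (simp add: hamming_sd sd_commute)
    consider "card (sd x v) = 0" | "card (sd x v) = 1" | "card (sd x v) \<ge> 2" by linarith
    then show ?thesis
    proof cases
      case 1
      then have "sd x v = {}" by simp
      then have "x = v" by (rule sd_empty_eq)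
      then show ?thesis using fa by (simp add: K_def sd_def)
    next
      case 2
      then obtain k where "sd x v = {k}" by (rule card_1_singletonE)
      then have sk: "sd v x = {k}" by (simp add: sd_commute)
      then have "x = toggle k v" by (rule sd_eq_single)
      moreover have "x \<in> K" using 2 hx by (simp add: K_def)
      ultimately show ?thesis using fa \<open>sd x v = {k}\<close> by (simp add: c_def)
    next
      case 3
      have "real (card (sd x v)) * (9/10) \<le> (\<Sum>k\<in>sd x v. c k)"
        using sum_bounded_below[of "sd x v" "9/10" c] c9 by simp
      moreover have "real (card (sd x v)) \<ge> 2" using 3 by simp
      ultimately have "(\<Sum>k\<in>sd x v. c k) \<ge> 18/10" by linarith
      moreover have "w x < 11/10" using ev od by (cases "even (card x)") fastforce+
      moreover have "w v \<ge> 0" using od[OF v] by simp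
      moreover have "x \<notin> K"
      proof
        assume "x \<in> K"
        then have "x = v \<or> hamming v x = 1" by (simp add: K_def)
        then show False using 3 hx by (auto simp: sd_def)
      qed
      moreover have "a \<bullet> vert x + c0 = w v + (\<Sum>k\<in>sd x v. c k)" using fa by blast
      ultimately have "w x < a \<bullet> vert x + c0" by linarith
      then show ?thesis using \<open>x \<notin> K\<close> by auto
    qed
  qed
  have uf: "upper_face w K" unfolding upper_face_def using key by blast
  show ?thesis using uf corner_affdim[of v] by (simp add: induced_cells_def K_def)
qed

lemma sum_pair:
  fixes W :: "'a::finite \<Rightarrow> real"
  assumes "x \<noteq> y"
  shows "(\<Sum>z\<in>UNIV. (if z = x then 1 else if z = y then -1 else 0) * W z) = W x - W y"
proof -
  have "(\<Sum>z\<in>UNIV. (if z = x then 1 else if z = y then -1 else 0) * W z)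
      = (\<Sum>z\<in>UNIV. (if z = x then W z else 0) - (if z = y then W z else 0))"
    using assms by (intro sum.cong) auto
  also have "\<dots> = W x - W y" by (simp add: sum_subtractf)
  finally show ?thesis .
qed


lemma part3:
  assumes L: "CARD('n::finite) \<ge> 2"
  shows "\<exists>w :: 'n set \<Rightarrow> real. fitness_landscape w \<and> generic w \<and> haldane w
                 \<and> corner_cut (induced_cells w)"
proof -
  obtain idx :: "'n set \<Rightarrow> nat" where inj: "inj idx"
    using finite_imp_inj_to_nat_seg[of "UNIV :: 'n set set"] by auto
  define w0 :: "'n set \<Rightarrow> real" where "w0 x = (if even (card x) then 1 else 0)" for x
  define depN :: "('n set \<Rightarrow> real) set"
    where "depN = (\<lambda>C. SOME \<mu>. depv C \<mu>) ` {C. \<exists>\<mu>. depv C \<mu>}"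
  define injN :: "('n set \<Rightarrow> real) set"
    where "injN = (\<lambda>p. (\<lambda>z. if z = fst p then 1 else if z = snd p then -1 else 0)) ` {p. fst p \<noteq> snd p}"
  define N where "N = depN \<union> injN"
  have fN: "finite N" unfolding N_def depN_def injN_def by simp
  have nz: "\<forall>\<nu>\<in>N. \<exists>x. \<nu> x \<noteq> 0"
  proof
    fix \<nu> assume "\<nu> \<in> N"
    then consider "\<nu> \<in> depN" | "\<nu> \<in> injN" unfolding N_def by blast
    then show "\<exists>x. \<nu> x \<noteq> 0"
    proof cases
      case 1
      then obtain C where C: "\<exists>\<mu>. depv C \<mu>" "\<nu> = (SOME \<mu>. depv C \<mu>)" unfolding depN_def by blast
      then have "depv C \<nu>" using someI_ex[OF C(1)] by simp
      then show ?thesis by (simp add: depv_def)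
    next
      case 2
      then obtain p where "\<nu> = (\<lambda>z. if z = fst p then 1 else if z = snd p then -1 else 0)"
        unfolding injN_def by blast
      then have "\<nu> (fst p) \<noteq> 0" by simp
      then show ?thesis by blast
    qed
  qed
  define Bad where "Bad = {t::real. \<exists>\<nu>\<in>N. (\<Sum>x\<in>UNIV. \<nu> x * (w0 x + t ^ Suc (idx x))) = 0}"
  have fB: "finite Bad" unfolding Bad_def by (rule poly_avoid[OF fN nz inj])
  have "infinite ({0<..<1/10::real} - Bad)"
    by (rule Diff_infinite_finite[OF fB]) (simp add: infinite_Ioo)
  then obtain t where t: "t \<in> {0<..<1/10}" "t \<notin> Bad"
    by (metis Diff_iff finite.emptyI ex_in_conv)
  define w where "w x = w0 x + t ^ Suc (idx x)" for x
  have tp: "0 < t ^ Suc k \<and> t ^ Suc k < 1/10" for k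
  proof -
    have "t ^ k \<le> 1" using t by (intro power_le_one) auto
    then have "t ^ Suc k \<le> t" using t by (simp add: mult_left_le)
    moreover have "0 < t ^ Suc k" using t by simp
    ultimately show ?thesis using t by simp
  qed
  have ev: "1 \<le> w x \<and> w x < 11/10" if "even (card x)" for x
    using tp[of "idx x"] that by (simp add: w_def w0_def)
  have od: "0 \<le> w x \<and> w x < 1/10" if "odd (card x)" for x
    using tp[of "idx x"] that by (simp add: w_def w0_def)
  have fl: "fitness_landscape w" unfolding fitness_landscape_def
    using ev od by (metis order_trans zero_le_one)
  have badI: "t \<in> Bad" if "\<nu> \<in> N" "(\<Sum>x\<in>UNIV. \<nu> x * w x) = 0" for \<nu>
    using that unfolding Bad_def w_def by blast
  have injw: "inj w"
  proof (rule injI, rule ccontr)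
    fix x y assume e: "w x = w y" and xy: "x \<noteq> y"
    define \<nu> :: "'n set \<Rightarrow> real" where "\<nu> = (\<lambda>z. if z = x then 1 else if z = y then -1 else 0)"
    have "\<nu> \<in> injN" unfolding injN_def \<nu>_def using xy
      by (intro image_eqI[of _ _ "(x, y)"]) auto
    then have "\<nu> \<in> N" by (simp add: N_def)
    moreover have "(\<Sum>z\<in>UNIV. \<nu> z * w z) = 0" unfolding \<nu>_def sum_pair[OF xy] using e by simp
    ultimately show False using badI t(2) by blast
  qed
  have gen: "generic w" unfolding generic_def
  proof (intro conjI injw ballI notI)
    fix S assume S: "S \<in> induced_cells w" and ad: "affine_dependent (vert ` S)"
    have ex: "\<exists>\<mu>. depv S \<mu>" by (rule dep_from_affdep[OF ad])
    define \<mu> where "\<mu> = (SOME \<mu>. depv S \<mu>)"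
    have d: "depv S \<mu>" unfolding \<mu>_def by (rule someI_ex[OF ex])
    have "\<mu> \<in> N" unfolding N_def depN_def \<mu>_def using ex by blast
    moreover have "(\<Sum>x\<in>UNIV. \<mu> x * w x) = 0"
      using d S by (intro dep_sum_zero) (auto simp: induced_cells_def)
    ultimately show False using badI t(2) by blast
  qed
  have pk: "peak w g \<longleftrightarrow> even (card g)" for g
  proof
    assume p: "peak w g"
    show "even (card g)"
    proof (rule ccontr)
      assume o: "odd (card g)"
      obtain k :: 'n where True by blast
      have "even (card (toggle k g))" using o parity_toggle by blast
      then have "w g < w (toggle k g)" using ev od o by fastforce
      moreover have "w (toggle k g) < w g" using peak_gt[OF p] .
      ultimately show False by simp
    qed
  next
    assume e: "even (card g)"
    show "peak w g" unfolding peak_def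
    proof (intro allI impI)
      fix h assume "hamming g h = 1"
      then obtain k where h: "h = toggle k g" using hamming1_iff by blast
      then have "odd (card h)" using e parity_toggle by blast
      then show "w h < w g" using ev[OF e] od by fastforce
    qed
  qed
  have "{g. peak w g} = {g. even (card g)}" using pk by blast
  then have hal: "haldane w" unfolding haldane_def using card_parity(1) L by simp
  have al: "alt w" using haldane_alt[OF hal] L by simp
  obtain i j :: 'n where ij: "i \<noteq> j" using two_loci[OF L] by blast
  define K where "K v = insert v {h. hamming v h = 1}" for v :: "'n set"
  have eqset: "{S \<in> induced_cells w. corner_simplex S} = K ` {v. odd (card v)}"
  proof
    show "K ` {v. odd (card v)} \<subseteq> {S \<in> induced_cells w. corner_simplex S}"
    proof
      fix S assume "S \<in> K ` {v. odd (card v)}"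
      then obtain v where v: "odd (card v)" "S = K v" by blast
      have "S \<in> induced_cells w" unfolding v(2) K_def using corner_face[of w v] ev od v(1) by blast
      moreover have "corner_simplex S" unfolding corner_simplex_def v(2) K_def by blast
      ultimately show "S \<in> {S \<in> induced_cells w. corner_simplex S}" by blast
    qed
    show "{S \<in> induced_cells w. corner_simplex S} \<subseteq> K ` {v. odd (card v)}"
    proof
      fix S assume "S \<in> {S \<in> induced_cells w. corner_simplex S}"
      then have S: "S \<in> induced_cells w" "corner_simplex S" by auto
      then obtain u where u: "S = K u" unfolding corner_simplex_def K_def by blast
      have "odd (card u)"
      proof (rule ccontr)
        assume "\<not> odd (card u)"
        then have "odd (card (toggle i u))" using parity_toggle by blast
        then have np: "\<not> peak w (toggle i u)" using pk by simp
        have iso: "isolated (induced_cells w) (toggle i u)" by (rule nonpeak_isolated[OF al np])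
        have m1: "toggle i u \<in> S" "toggle j u \<in> S" unfolding u K_def using hamming1_iff by blast+
        have "hamming (toggle i u) (toggle j (toggle i (toggle i u))) = 2"
          using ij hamming2_iff by blast
        then have "hamming (toggle i u) (toggle j u) = 2" by simp
        then show False using iso S(1) m1 unfolding isolated_def by blast
      qed
      then show "S \<in> K ` {v. odd (card v)}" using u by blast
    qed
  qed
  have injK: "inj_on K {v. odd (card v)}"
  proof (rule inj_onI)
    fix v v' assume v: "v \<in> {v. odd (card v)}" and v': "v' \<in> {v. odd (card v)}" and e: "K v = K v'"
    have "v \<in> K v" by (simp add: K_def)
    then have "v \<in> K v'" using e by simp
    then have "v = v' \<or> hamming v' v = 1" unfolding K_def by blast
    then show "v = v'"
    proof
      assume "hamming v' v = 1"
      then obtain k where "v = toggle k v'" using hamming1_iff by blast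
      then show "v = v'" using v v' parity_toggle by auto
    qed
  qed
  have "corner_cut (induced_cells w)" unfolding corner_cut_def eqset
    using card_image[OF injK] card_parity(2) L by simp
  then show ?thesis using fl gen hal by blast
qed

theorem mainTheorem8:
  assumes "CARD('n::finite) \<ge> 2"
  shows "(\<forall>w :: 'n set \<Rightarrow> real. fitness_landscape w \<and> generic w \<and> haldane w \<longrightarrow>
            card {g. isolated (induced_cells w) g} = 2 ^ (CARD('n) - 1))
       \<and> (CARD('n) \<ge> 3 \<longrightarrow>
            \<not> (\<exists>w :: 'n set \<Rightarrow> real. fitness_landscape w \<and> generic w \<and> haldane w
                 \<and> staircase (induced_cells w)))
       \<and> (\<exists>w :: 'n set \<Rightarrow> real. fitness_landscape w \<and> generic w \<and> haldane w
                 \<and> corner_cut (induced_cells w))"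
  using part1[OF assms] part2 part3[OF assms] by blast

end
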